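(* For any positive integer $k$ and for $n\ge 3$, $\dim_{k,f}(C_n)=\frac{n}{n-1}$ if $n \le 2k+3$ and $n$ is odd; $\dim_{k,f}(C_n)=\frac{n}{n-2}$ if $n\le 2k+3$ and $n$ is even; and $\dim_{k,f}(C_n)=\frac{n}{2(k+1)}$ if $n\ge 2k+4$.
   Context: $C_n$ is the cycle on $n$ vertices. $d(x,y)$ is the distance in $G$. For a positive integer $k$, $d_k(x,y)=\min\{d(x,y),k+1\}$ and $R_k\{x,y\}=\{z\in V(G): d_k(x,z)\neq d_k(y,z)\}$. For a function $g$ on $V(G)$ and $U\subseteq V(G)$, $g(U)=\sum_{s\in U}g(s)$. A function $h:V(G)\to[0,1]$ is a $k$-truncated resolving function of $G$ if $h(R_k\{x,y\})\ge 1$ for all distinct $x,y\in V(G)$; $\dim_{k,f}(G)$ is the minimum of $h(V(G))$ over all such $h$. *)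

theory Defs
  imports "HOL-Analysis.Analysis"
begin

text \<open>A (simple, undirected) graph is given by a vertex set V and an adjacency relation E.
  A walk of length m from x to y is a list of m+1 vertices in V, consecutive ones adjacent.\<close>

definition is_walk :: "'a set \<Rightarrow> ('a \<Rightarrow> 'a \<Rightarrow> bool) \<Rightarrow> 'a list \<Rightarrow> 'a \<Rightarrow> 'a \<Rightarrow> bool" where
  "is_walk V E p x y \<longleftrightarrow> p \<noteq> [] \<and> set p \<subseteq> V \<and> hd p = x \<and> last p = y \<and>
     (\<forall>i. Suc i < length p \<longrightarrow> E (p ! i) (p ! Suc i))"

text \<open>Graph distance (for connected graphs): least length of a walk.\<close>
definition graph_dist :: "'a set \<Rightarrow> ('a \<Rightarrow> 'a \<Rightarrow> bool) \<Rightarrow> 'a \<Rightarrow> 'a \<Rightarrow> nat" where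
  "graph_dist V E x y = (LEAST m. \<exists>p. is_walk V E p x y \<and> length p = Suc m)"

definition trunc_dist :: "'a set \<Rightarrow> ('a \<Rightarrow> 'a \<Rightarrow> bool) \<Rightarrow> nat \<Rightarrow> 'a \<Rightarrow> 'a \<Rightarrow> nat" where
  "trunc_dist V E k x y = min (graph_dist V E x y) (k + 1)"

definition trunc_resolving_set :: "'a set \<Rightarrow> ('a \<Rightarrow> 'a \<Rightarrow> bool) \<Rightarrow> nat \<Rightarrow> 'a \<Rightarrow> 'a \<Rightarrow> 'a set" where
  "trunc_resolving_set V E k x y = {z \<in> V. trunc_dist V E k x z \<noteq> trunc_dist V E k y z}"

definition is_trunc_resolving_fn :: "'a set \<Rightarrow> ('a \<Rightarrow> 'a \<Rightarrow> bool) \<Rightarrow> nat \<Rightarrow> ('a \<Rightarrow> real) \<Rightarrow> bool" where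
  "is_trunc_resolving_fn V E k h \<longleftrightarrow>
     (\<forall>v\<in>V. 0 \<le> h v \<and> h v \<le> 1) \<and>
     (\<forall>x\<in>V. \<forall>y\<in>V. x \<noteq> y \<longrightarrow> (\<Sum>z\<in>trunc_resolving_set V E k x y. h z) \<ge> 1)"

definition frac_trunc_metric_dim :: "'a set \<Rightarrow> ('a \<Rightarrow> 'a \<Rightarrow> bool) \<Rightarrow> nat \<Rightarrow> real" where
  "frac_trunc_metric_dim V E k = Inf {(\<Sum>v\<in>V. h v) | h. is_trunc_resolving_fn V E k h}"

definition cycle_vertices :: "nat \<Rightarrow> nat set" where
  "cycle_vertices n = {0..<n}"

definition cycle_adj :: "nat \<Rightarrow> nat \<Rightarrow> nat \<Rightarrow> bool" where
  "cycle_adj n i j \<longleftrightarrow> i < n \<and> j < n \<and> (j = (i + 1) mod n \<or> i = (j + 1) mod n)"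

end

theory Submission
  imports Defs
begin


definition cd :: "nat \<Rightarrow> int \<Rightarrow> int" where
  "cd n a = min (a mod int n) (int n - a mod int n)"

lemma cd_cong: "a mod int n = b mod int n \<Longrightarrow> cd n a = cd n b"
  by (simp add: cd_def)

lemma cd_nonneg: "n > 0 \<Longrightarrow> cd n a \<ge> 0"
  unfolding cd_def by (simp add: pos_mod_bound less_imp_le)

lemma cd_le_abs:
  assumes n: "n > 0" and c: "a mod int n = b mod int n"
  shows "cd n a \<le> \<bar>b\<bar>"
proof -
  have e: "cd n a = cd n b" using c by (rule cd_cong)
  show ?thesis
  proof (cases "b \<ge> 0")
    case True
    then have "b mod int n \<le> b" using n by (simp add: zmod_le_nonneg_dividend)
    then show ?thesis using e True unfolding cd_def by simp
  next
    case False
    show ?thesis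
    proof (cases "b mod int n = 0")
      case True then show ?thesis using e unfolding cd_def by simp
    next
      case nz: False
      have "(-b) mod int n = int n - b mod int n" using nz by (simp add: zmod_zminus1_eq_if)
      moreover have "(-b) mod int n \<le> -b" using False n by (simp add: zmod_le_nonneg_dividend)
      ultimately show ?thesis using e False unfolding cd_def by simp
    qed
  qed
qed

lemma cd_repr:
  assumes n: "n > 0"
  shows "\<exists>a'. a' mod int n = a mod int n \<and> \<bar>a'\<bar> = cd n a"
proof (cases "a mod int n \<le> int n - a mod int n")
  case True
  have "0 \<le> a mod int n" using n by simp
  then show ?thesis using True by (intro exI[of _ "a mod int n"]) (simp add: cd_def)
next
  case False
  have "(a mod int n - int n) mod int n = a mod int n" by (simp add: mod_diff_right_eq[symmetric])
  moreover have "0 \<le> a mod int n" "a mod int n < int n" using n by auto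
  ultimately show ?thesis using False by (intro exI[of _ "a mod int n - int n"]) (simp add: cd_def)
qed

lemma cd_triangle:
  assumes n: "n > 0"
  shows "cd n (a + b) \<le> cd n a + cd n b"
proof -
  obtain a' where a': "a' mod int n = a mod int n" "\<bar>a'\<bar> = cd n a" using cd_repr[OF n] by blast
  obtain b' where b': "b' mod int n = b mod int n" "\<bar>b'\<bar> = cd n b" using cd_repr[OF n] by blast
  have "(a + b) mod int n = (a' + b') mod int n"
    by (metis a'(1) b'(1) mod_add_cong)
  then have "cd n (a + b) \<le> \<bar>a' + b'\<bar>" using n cd_le_abs by blast
  then show ?thesis using a' b' by linarith
qed

lemma cd_zero: "cd n 0 = 0" by (simp add: cd_def)

lemma adj_cd:
  assumes n: "n > 0" and adj: "cycle_adj n a b"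
  shows "cd n (int b - int a) \<le> 1"
proof -
  from adj have ab: "a < n" "b < n" and d: "b = (a + 1) mod n \<or> a = (b + 1) mod n"
    unfolding cycle_adj_def by auto
  from d show ?thesis
  proof
    assume "b = (a + 1) mod n"
    then have "int b = (int a + 1) mod int n" by (simp add: zmod_int add.commute)
    then have "(int b - int a) mod int n = 1 mod int n" by (simp add: mod_diff_left_eq)
    then have "cd n (int b - int a) \<le> \<bar>1\<bar>" by (rule cd_le_abs[OF n])
    then show ?thesis by simp
  next
    assume "a = (b + 1) mod n"
    then have "int a = (int b + 1) mod int n" by (simp add: zmod_int add.commute)
    then have "(int b - int a) mod int n = (-1) mod int n" by (simp add: mod_diff_right_eq)
    then have "cd n (int b - int a) \<le> \<bar>-1\<bar>" by (rule cd_le_abs[OF n])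
    then show ?thesis by simp
  qed
qed

lemma walk_lower:
  assumes n: "n > 0"
  shows "is_walk {0..<n} (cycle_adj n) p x y \<Longrightarrow> cd n (int y - int x) \<le> int (length p) - 1"
proof (induction p arbitrary: x)
  case Nil then show ?case by (simp add: is_walk_def)
next
  case (Cons a p)
  show ?case
  proof (cases "p = []")
    case True
    then show ?thesis using Cons.prems by (auto simp add: is_walk_def cd_zero)
  next
    case False
    have w: "is_walk {0..<n} (cycle_adj n) p (hd p) y"
      using Cons.prems False unfolding is_walk_def
      by (auto simp: nth_Cons_Suc)
    have e: "cycle_adj n x (hd p)"
      using Cons.prems False unfolding is_walk_def
      by (metis hd_conv_nth length_Cons length_greater_0_conv list.sel(1) nth_Cons_0 nth_Cons_Suc zero_less_Suc Suc_mono)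
    have "cd n (int y - int x) = cd n ((int y - int (hd p)) + (int (hd p) - int x))" by simp
    also have "\<dots> \<le> cd n (int y - int (hd p)) + cd n (int (hd p) - int x)" using n by (rule cd_triangle)
    also have "\<dots> \<le> (int (length p) - 1) + 1" using Cons.IH[OF w] adj_cd[OF n e] by linarith
    finally show ?thesis by simp
  qed
qed



lemma fwd_walk:
  assumes n: "n > 0" and a: "a < n"
  shows "is_walk {0..<n} (cycle_adj n) (map (\<lambda>i. (a + i) mod n) [0..<Suc m]) a ((a + m) mod n)"
  unfolding is_walk_def
proof (intro conjI allI impI)
  show "map (\<lambda>i. (a + i) mod n) [0..<Suc m] \<noteq> []" by simp
  show "set (map (\<lambda>i. (a + i) mod n) [0..<Suc m]) \<subseteq> {0..<n}" using n by auto
  show "hd (map (\<lambda>i. (a + i) mod n) [0..<Suc m]) = a" using a by (simp add: hd_map upt_conv_Cons del: upt_Suc)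
  show "last (map (\<lambda>i. (a + i) mod n) [0..<Suc m]) = (a + m) mod n" by (simp add: last_map)
  fix i assume i: "Suc i < length (map (\<lambda>i. (a + i) mod n) [0..<Suc m])"
  then have "map (\<lambda>i. (a + i) mod n) [0..<Suc m] ! i = (a + i) mod n"
    "map (\<lambda>i. (a + i) mod n) [0..<Suc m] ! Suc i = (a + Suc i) mod n"
    by (auto simp del: upt_Suc)
  moreover have "cycle_adj n ((a + i) mod n) ((a + Suc i) mod n)"
    unfolding cycle_adj_def using n by (simp add: mod_Suc_eq)
  ultimately show "cycle_adj n (map (\<lambda>i. (a + i) mod n) [0..<Suc m] ! i)
      (map (\<lambda>i. (a + i) mod n) [0..<Suc m] ! Suc i)" by simp
qed

lemma bwd_walk:
  assumes n: "n > 0" and a: "a < n" and m: "m \<le> n"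
  shows "is_walk {0..<n} (cycle_adj n) (map (\<lambda>i. (a + n - i) mod n) [0..<Suc m]) a ((a + n - m) mod n)"
  unfolding is_walk_def
proof (intro conjI allI impI)
  show "map (\<lambda>i. (a + n - i) mod n) [0..<Suc m] \<noteq> []" by simp
  show "set (map (\<lambda>i. (a + n - i) mod n) [0..<Suc m]) \<subseteq> {0..<n}" using n by auto
  show "hd (map (\<lambda>i. (a + n - i) mod n) [0..<Suc m]) = a" using a by (simp add: hd_map upt_conv_Cons del: upt_Suc)
  show "last (map (\<lambda>i. (a + n - i) mod n) [0..<Suc m]) = (a + n - m) mod n" by (simp add: last_map)
  fix i assume i: "Suc i < length (map (\<lambda>i. (a + n - i) mod n) [0..<Suc m])"
  then have "map (\<lambda>i. (a + n - i) mod n) [0..<Suc m] ! i = (a + n - i) mod n"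
    "map (\<lambda>i. (a + n - i) mod n) [0..<Suc m] ! Suc i = (a + n - Suc i) mod n"
    by (auto simp del: upt_Suc)
  moreover have "(a + n - i) = Suc (a + n - Suc i)" using i m by auto
  then have "(a + n - i) mod n = ((a + n - Suc i) mod n + 1) mod n" by (simp add: mod_Suc_eq)
  then have "cycle_adj n ((a + n - i) mod n) ((a + n - Suc i) mod n)"
    unfolding cycle_adj_def using n by simp
  ultimately show "cycle_adj n (map (\<lambda>i. (a + n - i) mod n) [0..<Suc m] ! i)
      (map (\<lambda>i. (a + n - i) mod n) [0..<Suc m] ! Suc i)" by simp
qed

lemma walk_exists:
  assumes n: "n > 0" and a: "a < n" and b: "b < n"
  shows "\<exists>p. is_walk {0..<n} (cycle_adj n) p a b \<and> length p = Suc (nat (cd n (int b - int a)))"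
proof -
  define r where "r = (int b - int a) mod int n"
  have r0: "0 \<le> r" "r < int n" using n by (auto simp: r_def)
  have key: "(int a + r) mod int n = int b"
    unfolding r_def using b by (simp add: mod_add_right_eq)
  show ?thesis
  proof (cases "r \<le> int n - r")
    case True
    have cdr: "cd n (int b - int a) = r" using True unfolding cd_def r_def by simp
    have "(a + nat r) mod n = b"
      using key r0 by (metis nat_int of_nat_add of_nat_mod int_nat_eq of_nat_eq_iff)
    then show ?thesis using fwd_walk[OF n a, of "nat r"] cdr by (intro exI[of _ "map (\<lambda>i. (a + i) mod n) [0..<Suc (nat r)]"]) simp
  next
    case False
    have cdr: "cd n (int b - int a) = int n - r" using False unfolding cd_def r_def by simp
    have "(a + n - (n - nat r)) mod n = b"
    proof -
      have "a + n - (n - nat r) = a + nat r" using r0 by auto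
      moreover have "(a + nat r) mod n = b"
        using key r0 by (metis nat_int of_nat_add of_nat_mod int_nat_eq of_nat_eq_iff)
      ultimately show ?thesis by simp
    qed
    moreover have "nat (int n - r) = n - nat r" using r0 by auto
    ultimately show ?thesis using bwd_walk[OF n a, of "n - nat r"] cdr
      by (intro exI[of _ "map (\<lambda>i. (a + n - i) mod n) [0..<Suc (n - nat r)]"]) simp
  qed
qed

lemma graph_dist_cycle:
  assumes n: "n > 0" and a: "a < n" and b: "b < n"
  shows "graph_dist {0..<n} (cycle_adj n) a b = nat (cd n (int b - int a))"
  unfolding graph_dist_def
proof (rule Least_equality)
  show "\<exists>p. is_walk {0..<n} (cycle_adj n) p a b \<and> length p = Suc (nat (cd n (int b - int a)))"
    by (rule walk_exists[OF n a b])
next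
  fix m assume "\<exists>p. is_walk {0..<n} (cycle_adj n) p a b \<and> length p = Suc m"
  then obtain p where "is_walk {0..<n} (cycle_adj n) p a b" "length p = Suc m" by blast
  then have "cd n (int b - int a) \<le> int m" using walk_lower[OF n] by fastforce
  then show "nat (cd n (int b - int a)) \<le> m" by simp
qed



definition F :: "nat \<Rightarrow> int \<Rightarrow> int" where "F n t = min t (int n - t)"
definition Q :: "nat \<Rightarrow> int \<Rightarrow> int \<Rightarrow> int \<Rightarrow> bool" where
  "Q n K d t = (min (F n t) K \<noteq> min (F n (if d \<le> t then t - d else t - d + int n)) K)"

abbreviation RR where "RR n k x y \<equiv> trunc_resolving_set {0..<n} (cycle_adj n) k x y"

lemma cd_small: "0 \<le> a \<Longrightarrow> a < int n \<Longrightarrow> cd n a = F n a"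
  by (simp add: cd_def F_def)

lemma mem_R:
  assumes n: "n > 0" and x: "x < n" and y: "y < n" and t: "t < n"
  shows "((x + t) mod n \<in> RR n k x y) \<longleftrightarrow> Q n (int k + 1) ((int y - int x) mod int n) (int t)"
proof -
  define z where "z = (x + t) mod n"
  define d where "d = (int y - int x) mod int n"
  have z: "z < n" using n by (simp add: z_def)
  have d0: "0 \<le> d" "d < int n" using n by (auto simp: d_def)
  have zi: "int z = (int x + int t) mod int n" by (simp add: z_def zmod_int)
  have m1: "(int z - int x) mod int n = int t"
    using t by (simp add: zi mod_diff_left_eq)
  have "(int z - int y) mod int n = (int t - d) mod int n"
  proof -
    have "(int z - int y) mod int n = (int x + int t - int y) mod int n" by (simp add: zi mod_diff_left_eq)
    also have "\<dots> = (int t - (int y - int x)) mod int n" by (simp add: algebra_simps)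
    also have "\<dots> = (int t - d) mod int n" by (simp add: d_def mod_diff_right_eq)
    finally show ?thesis .
  qed
  also have "\<dots> = (if d \<le> int t then int t - d else int t - d + int n)"
  proof (cases "d \<le> int t")
    case True then show ?thesis using d0 t by simp
  next
    case False
    have "(int t - d) mod int n = (int t - d + int n) mod int n" by simp
    also have "\<dots> = int t - d + int n" using False d0 t by (intro mod_pos_pos_trivial) auto
    finally show ?thesis using False by simp
  qed
  finally have m2: "(int z - int y) mod int n = (if d \<le> int t then int t - d else int t - d + int n)" .
  have c1: "cd n (int z - int x) = F n (int t)"
  proof -
    have "(int z - int x) mod int n = int t mod int n" using m1 t by simp
    then have "cd n (int z - int x) = cd n (int t)" by (rule cd_cong)
    then show ?thesis using cd_small[of "int t" n] t by simp
  qed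
  have u0: "0 \<le> (if d \<le> int t then int t - d else int t - d + int n)"
    "(if d \<le> int t then int t - d else int t - d + int n) < int n" using d0 t by auto
  have c2: "cd n (int z - int y) = F n (if d \<le> int t then int t - d else int t - d + int n)"
  proof -
    have "(int z - int y) mod int n = (if d \<le> int t then int t - d else int t - d + int n) mod int n"
      using m2 u0 by simp
    then have "cd n (int z - int y) = cd n (if d \<le> int t then int t - d else int t - d + int n)" by (rule cd_cong)
    then show ?thesis using cd_small[OF u0] by simp
  qed
  have p1: "0 \<le> F n (int t)" "0 \<le> F n (if d \<le> int t then int t - d else int t - d + int n)"
    using u0 t by (auto simp: F_def)
  have "z \<in> RR n k x y \<longleftrightarrow> min (nat (cd n (int z - int x))) (k + 1) \<noteq> min (nat (cd n (int z - int y))) (k + 1)"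
    unfolding trunc_resolving_set_def trunc_dist_def
    using graph_dist_cycle[OF n x z] graph_dist_cycle[OF n y z] z by simp
  also have "\<dots> \<longleftrightarrow> Q n (int k + 1) d (int t)"
    unfolding Q_def c1 c2 using p1 by (auto simp: min_def split: if_splits)
  finally show ?thesis by (simp add: z_def d_def)
qed



lemma QA: "int n \<le> 2 * K + 1 \<Longrightarrow> 0 \<le> t \<Longrightarrow> t < int n \<Longrightarrow> 1 \<le> d \<Longrightarrow> d < int n \<Longrightarrow>
   \<not> Q n K d t \<Longrightarrow> 2 * t = d \<or> 2 * t = d + int n"
  unfolding Q_def F_def by (auto simp: min_def split: if_splits)

lemma QB2: "2 * d \<le> int n \<Longrightarrow> int n - d \<le> 2 * K - 2 \<Longrightarrow> 0 \<le> t \<Longrightarrow> t < int n \<Longrightarrow> 1 \<le> d \<Longrightarrow>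
   \<not> Q n K d t \<Longrightarrow> 2 * t = d \<or> 2 * t = d + int n"
  unfolding Q_def F_def by (auto simp: min_def split: if_splits)

lemma QB1: "2 * d \<le> int n \<Longrightarrow> int n - d \<ge> 2 * K - 1 \<Longrightarrow> 1 \<le> d \<Longrightarrow> 1 \<le> K \<Longrightarrow>
   0 \<le> j \<Longrightarrow> j < 2 * K \<Longrightarrow>
   Q n K d (if j < K then d + j else if j = K then 0 else int n - (j - K))"
  unfolding Q_def F_def by (auto simp: min_def split: if_splits)

lemma LA_odd: "int n = 2 * m + 1 \<Longrightarrow> m \<ge> 1 \<Longrightarrow> \<not> Q n K 1 (m + 1)"
  unfolding Q_def F_def by (auto simp: min_def split: if_splits)

lemma LA_even1: "int n = 2 * m \<Longrightarrow> m \<ge> 2 \<Longrightarrow> \<not> Q n K 2 1"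
  unfolding Q_def F_def by (auto simp: min_def split: if_splits)

lemma LA_even2: "int n = 2 * m \<Longrightarrow> m \<ge> 2 \<Longrightarrow> \<not> Q n K 2 (m + 1)"
  unfolding Q_def F_def by (auto simp: min_def split: if_splits)

lemma LB: "0 \<le> t \<Longrightarrow> t < int n \<Longrightarrow> Q n K 1 t \<Longrightarrow> t \<le> K \<or> t \<ge> int n - K + 1"
  unfolding Q_def F_def by (auto simp: min_def split: if_splits)



lemma inj_shift: "inj_on (\<lambda>t. (x + t) mod n) {0..<(n::nat)}"
proof (intro inj_onI)
  fix a b assume a: "a \<in> {0..<n}" and b: "b \<in> {0..<n}" and e: "(x + a) mod n = (x + b) mod n"
  have "int ((x + a) mod n) = int ((x + b) mod n)" using e by simp
  then have e2: "(int x + int a) mod int n = (int x + int b) mod int n" by (simp add: zmod_int)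
  have "int a = ((int x + int a) - int x) mod int n" using a by simp
  also have "\<dots> = ((int x + int a) mod int n - int x) mod int n" by (simp add: mod_diff_left_eq)
  also have "\<dots> = ((int x + int b) mod int n - int x) mod int n" using e2 by simp
  also have "\<dots> = int b" using b by (simp add: mod_diff_left_eq)
  finally show "a = b" by simp
qed

lemma card_R_ge:
  assumes n: "n > 0" and x: "x < n" and y: "y < n" and S: "S \<subseteq> {0..<n}"
    and Q: "\<And>t. t \<in> S \<Longrightarrow> Q n (int k + 1) ((int y - int x) mod int n) (int t)"
  shows "card S \<le> card (RR n k x y)"
proof -
  have "(\<lambda>t. (x + t) mod n) ` S \<subseteq> RR n k x y"
    using mem_R[OF n x y] Q S by auto
  moreover have "finite (RR n k x y)" unfolding trunc_resolving_set_def by simp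
  moreover have "card ((\<lambda>t. (x + t) mod n) ` S) = card S"
    using inj_on_subset[OF inj_shift S] by (rule card_image)
  ultimately show ?thesis by (metis card_mono)
qed

lemma d_pos:
  assumes x: "x < n" and y: "y < n" and xy: "x \<noteq> y"
  shows "1 \<le> (int y - int x) mod int n" "(int y - int x) mod int n < int n"
proof -
  have n: "n > 0" using x by simp
  show "(int y - int x) mod int n < int n" using n by simp
  have "(int y - int x) mod int n \<noteq> 0"
  proof
    assume "(int y - int x) mod int n = 0"
    then have "int y mod int n = int x mod int n" by (simp add: mod_eq_dvd_iff mod_eq_0_iff_dvd)
    then show False using x y xy by simp
  qed
  moreover have "0 \<le> (int y - int x) mod int n" using n by simp
  ultimately show "1 \<le> (int y - int x) mod int n" by linarith
qed

lemma card_E: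
  fixes d :: int and n :: nat
  defines "E \<equiv> {t\<in>{0..<n}. 2 * int t = d \<or> 2 * int t = d + int n}"
  shows "card E \<le> 2" "odd n \<Longrightarrow> card E \<le> 1" "finite E"
proof -
  show "finite E" unfolding E_def by simp
  have "E \<subseteq> {nat (d div 2), nat ((d + int n) div 2)}" unfolding E_def by auto
  then have "card E \<le> card {nat (d div 2), nat ((d + int n) div 2)}" by (rule card_mono[rotated]) simp
  also have "\<dots> \<le> 2" by (simp add: card_insert_if)
  finally show "card E \<le> 2" .
  assume o: "odd n"
  have "\<forall>a\<in>E. \<forall>b\<in>E. a = b"
  proof (intro ballI)
    fix a b assume "a \<in> E" "b \<in> E"
    then have "2 * int a = d \<or> 2 * int a = d + int n" "2 * int b = d \<or> 2 * int b = d + int n"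
      unfolding E_def by auto
    moreover have "\<not> (2 * int a = d \<and> 2 * int b = d + int n)" "\<not> (2 * int b = d \<and> 2 * int a = d + int n)"
      using o by (metis add_diff_cancel_left' even_of_nat_iff dvd_triv_left dvd_diff)+
    ultimately show "a = b" by auto
  qed
  then show "card E \<le> 1" using \<open>finite E\<close> by (simp add: card_le_Suc0_iff_eq)
qed

lemma card_via_E:
  assumes n: "n > 0" and x: "x < n" and y: "y < n"
    and H: "\<And>t. t < n \<Longrightarrow> \<not> Q n (int k + 1) ((int y - int x) mod int n) (int t) \<Longrightarrow>
       2 * int t = (int y - int x) mod int n \<or> 2 * int t = (int y - int x) mod int n + int n"
  shows "n - 2 \<le> card (RR n k x y)" "odd n \<Longrightarrow> n - 1 \<le> card (RR n k x y)"
proof -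
  define d where "d = (int y - int x) mod int n"
  define E where "E = {t\<in>{0..<n}. 2 * int t = d \<or> 2 * int t = d + int n}"
  have sub: "{0..<n} - E \<subseteq> {0..<n}" by auto
  have "card ({0..<n} - E) \<le> card (RR n k x y)"
    by (rule card_R_ge[OF n x y sub]) (use H in \<open>auto simp: E_def d_def\<close>)
  moreover have "n - card E \<le> card ({0..<n} - E)"
    using diff_card_le_card_Diff[of E "{0..<n}"] card_E(3)[of n d] by (simp add: E_def)
  ultimately have *: "n - card E \<le> card (RR n k x y)" by linarith
  show "n - 2 \<le> card (RR n k x y)" using * card_E(1)[of n d] unfolding E_def by linarith
  show "odd n \<Longrightarrow> n - 1 \<le> card (RR n k x y)" using * card_E(2)[of n d] unfolding E_def by linarith
qed

lemma cardA:
  assumes n: "n \<le> 2 * k + 3" and x: "x < n" and y: "y < n" and xy: "x \<noteq> y"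
  shows "n - 2 \<le> card (RR n k x y)" "odd n \<Longrightarrow> n - 1 \<le> card (RR n k x y)"
proof -
  have n0: "n > 0" using x by simp
  note dp = d_pos[OF x y xy]
  have H: "\<And>t. t < n \<Longrightarrow> \<not> Q n (int k + 1) ((int y - int x) mod int n) (int t) \<Longrightarrow>
       2 * int t = (int y - int x) mod int n \<or> 2 * int t = (int y - int x) mod int n + int n"
    by (rule QA) (use n dp in auto)
  show "n - 2 \<le> card (RR n k x y)" "odd n \<Longrightarrow> n - 1 \<le> card (RR n k x y)"
    using card_via_E[OF n0 x y H] by auto
qed

lemma cardB_half:
  assumes n: "2 * k + 4 \<le> n" and x: "x < n" and y: "y < n" and xy: "x \<noteq> y"
    and half: "2 * ((int y - int x) mod int n) \<le> int n"
  shows "2 * k + 2 \<le> card (RR n k x y)"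
proof -
  have n0: "n > 0" using x by simp
  define d where "d = (int y - int x) mod int n"
  note dp = d_pos[OF x y xy, folded d_def]
  show ?thesis
  proof (cases "int n - d \<le> 2 * (int k + 1) - 2")
    case True
    have H: "\<And>t. t < n \<Longrightarrow> \<not> Q n (int k + 1) ((int y - int x) mod int n) (int t) \<Longrightarrow>
       2 * int t = (int y - int x) mod int n \<or> 2 * int t = (int y - int x) mod int n + int n"
      by (rule QB2) (use True half dp in \<open>auto simp: d_def\<close>)
    have "n - 2 \<le> card (RR n k x y)" by (rule card_via_E(1)[OF n0 x y]) (rule H)
    then show ?thesis using n by linarith
  next
    case False
    define G where "G = (\<lambda>j::int. if j < int k + 1 then d + j else if j = int k + 1 then 0
        else int n - (j - (int k + 1)))"
    define g where "g = (\<lambda>j::nat. nat (G (int j)))"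
    have Gb: "0 \<le> G j \<and> G j < int n" if "0 \<le> j" "j < 2 * (int k + 1)" for j
      using that dp False half unfolding G_def by (auto split: if_splits)
    have Ginj: "a = b" if "0 \<le> a" "a < 2 * (int k + 1)" "0 \<le> b" "b < 2 * (int k + 1)" "G a = G b" for a b
      using that dp False half unfolding G_def by (auto split: if_splits)
    have gi: "int (g j) = G (int j)" if "j < 2 * k + 2" for j
      using Gb[of "int j"] that unfolding g_def by simp
    have inj: "inj_on g {0..<2 * k + 2}"
    proof (intro inj_onI)
      fix a b assume a: "a \<in> {0..<2 * k + 2}" and b: "b \<in> {0..<2 * k + 2}" and e: "g a = g b"
      have "G (int a) = G (int b)" using e gi[of a] gi[of b] a b by simp
      then have "int a = int b" using Ginj[of "int a" "int b"] a b by simp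
      then show "a = b" by simp
    qed
    have sub: "g ` {0..<2 * k + 2} \<subseteq> {0..<n}"
    proof
      fix z assume "z \<in> g ` {0..<2 * k + 2}"
      then obtain j where j: "j < 2 * k + 2" "z = g j" by auto
      have "int (g j) < int n" using gi[OF j(1)] Gb[of "int j"] j(1) by simp
      then show "z \<in> {0..<n}" using j by simp
    qed
    have "card (g ` {0..<2 * k + 2}) \<le> card (RR n k x y)"
    proof (rule card_R_ge[OF n0 x y sub])
      fix t assume "t \<in> g ` {0..<2 * k + 2}"
      then obtain j where j: "j < 2 * k + 2" "t = g j" by auto
      have "Q n (int k + 1) d (G (int j))"
        unfolding G_def by (rule QB1) (use half False dp j in \<open>auto simp: d_def\<close>)
      then show "Q n (int k + 1) ((int y - int x) mod int n) (int t)"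
        using gi[OF j(1)] j(2) by (simp add: d_def)
    qed
    moreover have "card (g ` {0..<2 * k + 2}) = 2 * k + 2" using card_image[OF inj] by simp
    ultimately show ?thesis by simp
  qed
qed

lemma RR_sym: "RR n k x y = RR n k y x"
  unfolding trunc_resolving_set_def by auto

lemma cardB:
  assumes n: "2 * k + 4 \<le> n" and x: "x < n" and y: "y < n" and xy: "x \<noteq> y"
  shows "2 * k + 2 \<le> card (RR n k x y)"
proof (cases "2 * ((int y - int x) mod int n) \<le> int n")
  case True then show ?thesis using cardB_half[OF n x y xy] by simp
next
  case False
  have nz: "(int y - int x) mod int n \<noteq> 0" using d_pos[OF x y xy] by simp
  have "(int x - int y) mod int n = (- (int y - int x)) mod int n" by simp
  also have "\<dots> = (if (int y - int x) mod int n = 0 then 0 else int n - (int y - int x) mod int n)"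
    by (rule zmod_zminus1_eq_if)
  also have "\<dots> = int n - (int y - int x) mod int n" using nz by simp
  finally have "2 * ((int x - int y) mod int n) \<le> int n" using False by simp
  then have "2 * k + 2 \<le> card (RR n k y x)" using cardB_half[OF n y x] xy by simp
  then show ?thesis using RR_sym by metis
qed



lemma sum_shift:
  fixes h :: "nat \<Rightarrow> real"
  shows "(\<Sum>x\<in>{0..<n}. h ((x + c) mod n)) = (\<Sum>x\<in>{0..<n}. h x)"
proof (cases "n = 0")
  case True then show ?thesis by simp
next
  case False
  have im: "(\<lambda>x. (x + c) mod n) ` {0..<n} = {0..<n}"
  proof (rule card_subset_eq)
    show "(\<lambda>x. (x + c) mod n) ` {0..<n} \<subseteq> {0..<n}" using False by auto
    show "card ((\<lambda>x. (x + c) mod n) ` {0..<n}) = card {0..<n}"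
    proof -
      have "inj_on (\<lambda>x. (x + c) mod n) {0..<n}" using inj_shift[of c n] by (simp add: add.commute)
      then show ?thesis by (rule card_image)
    qed
  qed simp
  have "(\<Sum>x\<in>{0..<n}. h x) = (\<Sum>x\<in>(\<lambda>x. (x + c) mod n) ` {0..<n}. h x)" using im by simp
  also have "\<dots> = (\<Sum>x\<in>{0..<n}. h ((x + c) mod n))"
  proof -
    have "inj_on (\<lambda>x. (x + c) mod n) {0..<n}" using inj_shift[of c n] by (simp add: add.commute)
    then show ?thesis by (simp add: sum.reindex)
  qed
  finally show ?thesis by simp
qed

lemma dshift:
  assumes x: "x < n" and c: "c < n"
  shows "(int ((x + c) mod n) - int x) mod int n = int c"
proof -
  have "(int ((x + c) mod n) - int x) mod int n = ((int x + int c) mod int n - int x) mod int n"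
    by (simp add: zmod_int)
  also have "\<dots> = int c" using c by (simp add: mod_diff_left_eq)
  finally show ?thesis .
qed

abbreviation res where "res n k h \<equiv> is_trunc_resolving_fn {0..<n} (cycle_adj n) k h"

lemma lower_gen:
  fixes h :: "nat \<Rightarrow> real" and B :: "nat \<Rightarrow> real"
  assumes r: "res n k h" and p: "\<And>x. x < n \<Longrightarrow> p x < n \<and> p x \<noteq> x"
    and b: "\<And>x. x < n \<Longrightarrow> (\<Sum>z\<in>RR n k x (p x). h z) \<le> B x"
  shows "real n \<le> (\<Sum>x\<in>{0..<n}. B x)"
proof -
  have "\<And>x. x \<in> {0..<n} \<Longrightarrow> 1 \<le> B x"
  proof -
    fix x assume "x \<in> {0..<n}"
    then have "1 \<le> (\<Sum>z\<in>RR n k x (p x). h z)" using r p[of x] unfolding is_trunc_resolving_fn_def by auto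
    then show "1 \<le> B x" using b[of x] \<open>x \<in> {0..<n}\<close> by auto
  qed
  then have "(\<Sum>x\<in>{0..<n}. (1::real)) \<le> (\<Sum>x\<in>{0..<n}. B x)" by (rule sum_mono)
  then show ?thesis by simp
qed

lemma sum_sub_le:
  fixes h :: "nat \<Rightarrow> real"
  assumes r: "res n k h" and s: "A \<subseteq> {0..<n} - D"
  shows "(\<Sum>z\<in>A. h z) \<le> (\<Sum>z\<in>{0..<n} - D. h z)"
  by (rule sum_mono2) (use r s in \<open>auto simp: is_trunc_resolving_fn_def\<close>)

lemma RR_sub: "RR n k x y \<subseteq> {0..<n}" unfolding trunc_resolving_set_def by auto

lemma lowerA_odd:
  fixes h :: "nat \<Rightarrow> real"
  assumes r: "res n k h" and n3: "n \<ge> 3" and o: "odd n"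
  shows "real n \<le> (real n - 1) * (\<Sum>z\<in>{0..<n}. h z)"
proof -
  define H where "H = (\<Sum>z\<in>{0..<n}. h z)"
  define c where "c = (n + 1) div 2"
  obtain m where m: "n = 2 * m + 1" using o oddE by blast
  have c: "c < n" "c = m + 1" using m n3 by (auto simp: c_def)
  have n0: "n > 0" using n3 by simp
  have "real n \<le> (\<Sum>x\<in>{0..<n}. H - h ((x + c) mod n))"
  proof (rule lower_gen[OF r, of "\<lambda>x. (x + 1) mod n"])
    fix x assume x: "x < n"
    have "(x + 1) mod n \<noteq> (x + 0) mod n"
      using inj_on_eq_iff[OF inj_shift[of x n], of 1 0] n3 by auto
    then show "(x + 1) mod n < n \<and> (x + 1) mod n \<noteq> x" using x n0 by simp
    have ni: "(x + c) mod n \<notin> RR n k x ((x + 1) mod n)"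
    proof
      assume "(x + c) mod n \<in> RR n k x ((x + 1) mod n)"
      then have "Q n (int k + 1) 1 (int c)"
        using mem_R[OF n0 x _ c(1)] dshift[OF x, of 1] n3 x by simp
      moreover have "\<not> Q n (int k + 1) 1 (int m + 1)" by (rule LA_odd) (use m n3 in auto)
      ultimately show False using c by (simp add: ac_simps)
    qed
    have "(\<Sum>z\<in>RR n k x ((x + 1) mod n). h z) \<le> (\<Sum>z\<in>{0..<n} - {(x + c) mod n}. h z)"
      by (rule sum_sub_le[OF r]) (use ni RR_sub in blast)
    also have "\<dots> = H - h ((x + c) mod n)" unfolding H_def using n0
      by (subst sum_diff1) auto
    finally show "(\<Sum>z\<in>RR n k x ((x + 1) mod n). h z) \<le> H - h ((x + c) mod n)" .
  qed
  also have "\<dots> = real n * H - H" using sum_shift[of h c n] by (simp add: sum_subtractf H_def)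
  finally show ?thesis by (simp add: H_def algebra_simps)
qed

lemma lowerA_even:
  fixes h :: "nat \<Rightarrow> real"
  assumes r: "res n k h" and n3: "n \<ge> 3" and o: "even n"
  shows "real n \<le> (real n - 2) * (\<Sum>z\<in>{0..<n}. h z)"
proof -
  define H where "H = (\<Sum>z\<in>{0..<n}. h z)"
  obtain m where m: "n = 2 * m" using o by blast
  have m2: "m \<ge> 2" using m n3 by simp
  have n0: "n > 0" using n3 by simp
  have c: "1 < n" "m + 1 < n" "2 < n" using m m2 by auto
  have "real n \<le> (\<Sum>x\<in>{0..<n}. H - h ((x + 1) mod n) - h ((x + (m + 1)) mod n))"
  proof (rule lower_gen[OF r, of "\<lambda>x. (x + 2) mod n"])
    fix x assume x: "x < n"
    have "(x + 2) mod n \<noteq> (x + 0) mod n"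
      using inj_on_eq_iff[OF inj_shift[of x n], of 2 0] c by auto
    then show "(x + 2) mod n < n \<and> (x + 2) mod n \<noteq> x" using x n0 by simp
    have dd: "(int ((x + 2) mod n) - int x) mod int n = 2" using dshift[OF x c(3)] by simp
    have ni1: "(x + 1) mod n \<notin> RR n k x ((x + 2) mod n)"
    proof
      assume "(x + 1) mod n \<in> RR n k x ((x + 2) mod n)"
      then have "Q n (int k + 1) 2 1"
        using mem_R[OF n0 x _ c(1)] dd n0 x by simp
      moreover have "\<not> Q n (int k + 1) 2 1" by (rule LA_even1[of n "int m"]) (use m m2 in auto)
      ultimately show False by simp
    qed
    have ni2: "(x + (m + 1)) mod n \<notin> RR n k x ((x + 2) mod n)"
    proof
      assume "(x + (m + 1)) mod n \<in> RR n k x ((x + 2) mod n)"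
      then have "Q n (int k + 1) 2 (int (m + 1))"
        using mem_R[OF n0 x _ c(2)] dd n0 x by simp
      then show False using LA_even2[of n "int m" "int k + 1"] m m2 by (simp add: ac_simps)
    qed
    have ne: "(x + 1) mod n \<noteq> (x + (m + 1)) mod n"
      using inj_on_eq_iff[OF inj_shift[of x n], of 1 "m + 1"] c m2 by auto
    have "(\<Sum>z\<in>RR n k x ((x + 2) mod n). h z) \<le> (\<Sum>z\<in>{0..<n} - {(x + 1) mod n, (x + (m + 1)) mod n}. h z)"
      by (rule sum_sub_le[OF r]) (use ni1 ni2 RR_sub in blast)
    also have "\<dots> = H - h ((x + 1) mod n) - h ((x + (m + 1)) mod n)" unfolding H_def using n0 ne
      by (subst sum_diff) (auto simp: sum.insert_if)
    finally show "(\<Sum>z\<in>RR n k x ((x + 2) mod n). h z) \<le> H - h ((x + 1) mod n) - h ((x + (m + 1)) mod n)" .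
  qed
  also have "\<dots> = real n * H - H - H"
    using sum_shift[of h 1 n] sum_shift[of h "m + 1" n] by (simp add: sum_subtractf H_def)
  finally show ?thesis by (simp add: H_def algebra_simps)
qed



lemma lowerB:
  fixes h :: "nat \<Rightarrow> real"
  assumes r: "res n k h" and n: "2 * k + 4 \<le> n"
  shows "real n \<le> (2 * real k + 2) * (\<Sum>z\<in>{0..<n}. h z)"
proof -
  define H where "H = (\<Sum>z\<in>{0..<n}. h z)"
  have n0: "n > 0" "1 < n" using n by auto
  have hnn: "\<And>z. z < n \<Longrightarrow> 0 \<le> h z" using r unfolding is_trunc_resolving_fn_def by auto
  have "real n \<le> (\<Sum>x\<in>{0..<n}. \<Sum>j\<in>{0..<2 * k + 2}. h ((x + (n - k + j)) mod n))"
  proof (rule lower_gen[OF r, of "\<lambda>x. (x + 1) mod n"])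
    fix x assume x: "x < n"
    have "(x + 1) mod n \<noteq> (x + 0) mod n"
      using inj_on_eq_iff[OF inj_shift[of x n], of 1 0] n0 by auto
    then show "(x + 1) mod n < n \<and> (x + 1) mod n \<noteq> x" using x n0 by simp
    have sub: "RR n k x ((x + 1) mod n) \<subseteq> (\<lambda>j. (x + (n - k + j)) mod n) ` {0..<2 * k + 2}"
    proof
      fix z assume zR: "z \<in> RR n k x ((x + 1) mod n)"
      then have z: "z < n" using subsetD[OF RR_sub zR] by simp
      define t where "t = (z + n - x) mod n"
      have t: "t < n" using n0 by (simp add: t_def)
      have zt: "z = (x + t) mod n"
      proof -
        have "(x + t) mod n = (x + (z + n - x)) mod n" by (simp add: t_def mod_add_right_eq)
        also have "x + (z + n - x) = z + n" using x by simp
        finally show ?thesis using z by simp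
      qed
      have "Q n (int k + 1) 1 (int t)"
        using mem_R[OF n0(1) x _ t, of "(x + 1) mod n" k] zR zt dshift[OF x n0(2)] n0 by simp
      then have tt: "int t \<le> int k + 1 \<or> int t \<ge> int n - (int k + 1) + 1"
        using LB[of "int t" n "int k + 1"] t by simp
      show "z \<in> (\<lambda>j. (x + (n - k + j)) mod n) ` {0..<2 * k + 2}"
      proof (cases "t \<ge> n - k")
        case True
        have "(x + (n - k + (t - (n - k)))) mod n = z" using True zt by simp
        moreover have "t - (n - k) < 2 * k + 2" using t by simp
        ultimately show ?thesis by (intro image_eqI[of _ _ "t - (n - k)"]) auto
      next
        case False
        then have tk: "t \<le> k + 1" using tt by linarith
        have "(x + (n - k + (t + k))) mod n = (x + t + n) mod n" using n by (simp add: algebra_simps)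
        also have "\<dots> = z" using zt by simp
        finally have "(x + (n - k + (t + k))) mod n = z" .
        moreover have "t + k < 2 * k + 2" using tk by simp
        ultimately show ?thesis by (intro image_eqI[of _ _ "t + k"]) auto
      qed
    qed
    have "(\<Sum>z\<in>RR n k x ((x + 1) mod n). h z) \<le> (\<Sum>z\<in>(\<lambda>j. (x + (n - k + j)) mod n) ` {0..<2 * k + 2}. h z)"
      by (rule sum_mono2) (use sub hnn n0 in auto)
    also have "\<dots> \<le> (\<Sum>j\<in>{0..<2 * k + 2}. h ((x + (n - k + j)) mod n))"
      using sum_image_le[of "{0..<2 * k + 2}" h "\<lambda>j. (x + (n - k + j)) mod n"] hnn n0 by (simp add: comp_def)
    finally show "(\<Sum>z\<in>RR n k x ((x + 1) mod n). h z) \<le> (\<Sum>j\<in>{0..<2 * k + 2}. h ((x + (n - k + j)) mod n))" .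
  qed
  also have "\<dots> = (\<Sum>j\<in>{0..<2 * k + 2}. \<Sum>x\<in>{0..<n}. h ((x + (n - k + j)) mod n))" by (rule sum.swap)
  also have "\<dots> = (\<Sum>j\<in>{0..<2 * k + 2}. H)" unfolding H_def by (intro sum.cong refl sum_shift)
  also have "\<dots> = (2 * real k + 2) * H" by simp
  finally show ?thesis by (simp add: H_def)
qed

lemma upper:
  assumes m: "m > 0" and c: "\<And>x y. x < n \<Longrightarrow> y < n \<Longrightarrow> x \<noteq> y \<Longrightarrow> m \<le> card (RR n k x y)"
  shows "res n k (\<lambda>_. 1 / real m)"
  unfolding is_trunc_resolving_fn_def
proof (intro conjI ballI impI)
  fix v show "0 \<le> 1 / real m" by simp
  show "1 / real m \<le> 1" using m by simp
next
  fix x y assume x: "x \<in> {0..<n}" and y: "y \<in> {0..<n}" and xy: "x \<noteq> y"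
  have "real m \<le> real (card (RR n k x y))" using c[of x y] x y xy by simp
  then show "1 \<le> (\<Sum>z\<in>RR n k x y. 1 / real m)" using m by (simp add: field_simps)
qed

lemma dim_eq:
  assumes lo: "\<And>h. res n k h \<Longrightarrow> L \<le> (\<Sum>v\<in>{0..<n}. h v)"
    and up: "res n k (\<lambda>_. c)" and val: "real n * c = L"
  shows "frac_trunc_metric_dim {0..<n} (cycle_adj n) k = L"
  unfolding frac_trunc_metric_dim_def
proof (rule cInf_eq_minimum)
  show "L \<in> {\<Sum>v\<in>{0..<n}. h v |h. res n k h}"
    using up val by (intro CollectI exI[of _ "\<lambda>_. c"]) simp
next
  fix s assume "s \<in> {\<Sum>v\<in>{0..<n}. h v |h. res n k h}"
  then show "L \<le> s" using lo by auto
qed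

theorem theorem3p4:
  fixes k n :: nat
  assumes "k \<ge> 1" and "n \<ge> 3"
  shows "(n \<le> 2 * k + 3 \<and> odd n \<longrightarrow>
            frac_trunc_metric_dim (cycle_vertices n) (cycle_adj n) k = real n / (real n - 1))
       \<and> (n \<le> 2 * k + 3 \<and> even n \<longrightarrow>
            frac_trunc_metric_dim (cycle_vertices n) (cycle_adj n) k = real n / (real n - 2))
       \<and> (n \<ge> 2 * k + 4 \<longrightarrow>
            frac_trunc_metric_dim (cycle_vertices n) (cycle_adj n) k = real n / (2 * (real k + 1)))"
proof (intro conjI impI)
  assume a: "n \<le> 2 * k + 3 \<and> odd n"
  have up: "res n k (\<lambda>_. 1 / real (n - 1))"
    by (rule upper) (use assms a cardA(2) in auto)
  have lo: "real n / (real n - 1) \<le> (\<Sum>v\<in>{0..<n}. h v)" if "res n k h" for h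
    using lowerA_odd[OF that assms(2)] a assms(2) by (simp add: pos_divide_le_eq mult.commute)
  show "frac_trunc_metric_dim (cycle_vertices n) (cycle_adj n) k = real n / (real n - 1)"
    unfolding cycle_vertices_def by (rule dim_eq[OF lo up]) (use assms(2) in \<open>auto simp: of_nat_diff\<close>)
next
  assume a: "n \<le> 2 * k + 3 \<and> even n"
  have up: "res n k (\<lambda>_. 1 / real (n - 2))"
    by (rule upper) (use assms a cardA(1) in auto)
  have lo: "real n / (real n - 2) \<le> (\<Sum>v\<in>{0..<n}. h v)" if "res n k h" for h
    using lowerA_even[OF that assms(2)] a assms(2) by (simp add: pos_divide_le_eq mult.commute)
  show "frac_trunc_metric_dim (cycle_vertices n) (cycle_adj n) k = real n / (real n - 2)"
    unfolding cycle_vertices_def by (rule dim_eq[OF lo up]) (use assms(2) in \<open>auto simp: of_nat_diff\<close>)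
next
  assume a: "n \<ge> 2 * k + 4"
  have up: "res n k (\<lambda>_. 1 / real (2 * k + 2))"
    by (rule upper) (use a cardB in auto)
  have lo: "real n / (2 * (real k + 1)) \<le> (\<Sum>v\<in>{0..<n}. h v)" if "res n k h" for h
    using lowerB[OF that a] by (simp add: pos_divide_le_eq mult.commute algebra_simps)
  show "frac_trunc_metric_dim (cycle_vertices n) (cycle_adj n) k = real n / (2 * (real k + 1))"
  proof -
    have e: "real (2 * k + 2) = 2 * (real k + 1)" by simp
    show ?thesis unfolding cycle_vertices_def by (rule dim_eq[OF lo up]) (simp only: e, simp)
  qed
qed

end
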